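(* Let $V\subset\mathbb{R}^n$ be a singular irreducible central real algebraic variety with coordinate ring $A=\mathbb{R}[V]$, and let $B$ be an $A$-algebra which is a subring of the ring of continuous semi-algebraic functions on $V$ (containing the polynomial functions). Assume $B$ has the Łojasiewicz property: for any $f,g\in B$ with $\mathcal{Z}(f)\subset\mathcal{Z}(g)$ there exist $h\in B$ and an integer $N$ with $g^N=fh$. Then $B$ has the weak substitution property over points: every ring homomorphism $A\to\mathbb{R}$ admits one and only one extension to a ring homomorphism $B\to\mathbb{R}$.
   Context: $V$ is central if its non-singular points are dense in $V$ for the Euclidean topology. $\mathcal{Z}(f)$ denotes the zero set of $f$ in $V$. *)

theory Defs
  imports "HOL-Analysis.Analysis"
begin

inductive polyfun :: "('a::euclidean_space \<Rightarrow> real) \<Rightarrow> bool" where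
  const: "polyfun (\<lambda>x. c)"
| coord: "b \<in> Basis \<Longrightarrow> polyfun (\<lambda>x. x \<bullet> b)"
| add: "polyfun p \<Longrightarrow> polyfun q \<Longrightarrow> polyfun (\<lambda>x. p x + q x)"
| mult: "polyfun p \<Longrightarrow> polyfun q \<Longrightarrow> polyfun (\<lambda>x. p x * q x)"

definition alg_set :: "'a::euclidean_space set \<Rightarrow> bool" where
  "alg_set V \<longleftrightarrow> (\<exists>P. finite P \<and> (\<forall>p\<in>P. polyfun p) \<and> V = {x. \<forall>p\<in>P. p x = 0})"

definition irreducible_alg :: "'a::euclidean_space set \<Rightarrow> bool" where
  "irreducible_alg V \<longleftrightarrow> alg_set V \<and> V \<noteq> {} \<and>
     (\<forall>W1 W2. alg_set W1 \<and> alg_set W2 \<and> V = W1 \<union> W2 \<longrightarrow> V = W1 \<or> V = W2)"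

inductive semialg :: "'a::euclidean_space set \<Rightarrow> bool" where
  basic: "polyfun p \<Longrightarrow> semialg {x. 0 < p x}"
| compl: "semialg S \<Longrightarrow> semialg (- S)"
| union: "semialg S \<Longrightarrow> semialg T \<Longrightarrow> semialg (S \<union> T)"

text \<open>Functions on V are represented by functions on the ambient space
that vanish outside V.\<close>
definition restr :: "'a set \<Rightarrow> ('a \<Rightarrow> real) \<Rightarrow> 'a \<Rightarrow> real" where
  "restr V f = (\<lambda>x. if x \<in> V then f x else 0)"

definition unit_on :: "'a set \<Rightarrow> 'a \<Rightarrow> real" where
  "unit_on V = restr V (\<lambda>_. 1)"

definition coord_ring :: "'a::euclidean_space set \<Rightarrow> ('a \<Rightarrow> real) set" where
  "coord_ring V = {restr V p | p. polyfun p}"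

definition cont_semialg_funs :: "'a::euclidean_space set \<Rightarrow> ('a \<Rightarrow> real) set" where
  "cont_semialg_funs V =
     {restr V f | f. continuous_on V f \<and> semialg {(x, f x) | x. x \<in> V}}"

definition zero_set :: "'a set \<Rightarrow> ('a \<Rightarrow> real) \<Rightarrow> 'a set" where
  "zero_set V f = {x \<in> V. f x = 0}"

definition prime_ideal_in :: "('a \<Rightarrow> real) set \<Rightarrow> ('a \<Rightarrow> real) \<Rightarrow> ('a \<Rightarrow> real) set \<Rightarrow> bool" where
  "prime_ideal_in R u I \<longleftrightarrow> I \<subseteq> R \<and> (\<lambda>_. 0) \<in> I \<and>
     (\<forall>a\<in>I. \<forall>b\<in>I. (\<lambda>x. a x + b x) \<in> I) \<and>
     (\<forall>a\<in>I. \<forall>r\<in>R. (\<lambda>x. r x * a x) \<in> I) \<and>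
     u \<notin> I \<and>
     (\<forall>a\<in>R. \<forall>b\<in>R. (\<lambda>x. a x * b x) \<in> I \<longrightarrow> a \<in> I \<or> b \<in> I)"

definition krull_dim :: "('a \<Rightarrow> real) set \<Rightarrow> ('a \<Rightarrow> real) \<Rightarrow> nat" where
  "krull_dim R u = Sup {d. \<exists>c :: nat \<Rightarrow> ('a \<Rightarrow> real) set.
       (\<forall>i\<le>d. prime_ideal_in R u (c i)) \<and> (\<forall>i<d. c i \<subset> c (Suc i))}"

definition alg_dim :: "'a::euclidean_space set \<Rightarrow> nat" where
  "alg_dim V = krull_dim (coord_ring V) (unit_on V)"

definition grad :: "('a::euclidean_space \<Rightarrow> real) \<Rightarrow> 'a \<Rightarrow> 'a" where
  "grad p x = (\<Sum>b\<in>Basis. frechet_derivative p (at x) b *\<^sub>R b)"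

text \<open>Non-singular point of V (in dimension dim V), via the Jacobian criterion:
the gradients at x of the polynomials vanishing on V span a space of dimension
n - dim V.\<close>
definition nonsingular_pt :: "'a::euclidean_space set \<Rightarrow> 'a \<Rightarrow> bool" where
  "nonsingular_pt V x \<longleftrightarrow> x \<in> V \<and>
     dim {grad p x | p. polyfun p \<and> (\<forall>y\<in>V. p y = 0)} = DIM('a) - alg_dim V"

definition central :: "'a::euclidean_space set \<Rightarrow> bool" where
  "central V \<longleftrightarrow> V \<subseteq> closure {x. nonsingular_pt V x}"

definition singular_var :: "'a::euclidean_space set \<Rightarrow> bool" where
  "singular_var V \<longleftrightarrow> (\<exists>x\<in>V. \<not> nonsingular_pt V x)"

definition csa_subalgebra :: "'a::euclidean_space set \<Rightarrow> ('a \<Rightarrow> real) set \<Rightarrow> bool" where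
  "csa_subalgebra V B \<longleftrightarrow> coord_ring V \<subseteq> B \<and> B \<subseteq> cont_semialg_funs V \<and>
     (\<forall>f\<in>B. \<forall>g\<in>B. (\<lambda>x. f x + g x) \<in> B \<and> (\<lambda>x. f x * g x) \<in> B \<and> (\<lambda>x. - f x) \<in> B)"

definition lojasiewicz_prop :: "'a set \<Rightarrow> ('a \<Rightarrow> real) set \<Rightarrow> bool" where
  "lojasiewicz_prop V B \<longleftrightarrow> (\<forall>f\<in>B. \<forall>g\<in>B. zero_set V f \<subseteq> zero_set V g \<longrightarrow>
     (\<exists>h\<in>B. \<exists>N::nat. \<forall>x\<in>V. g x ^ N = f x * h x))"

definition ring_hom_to_real :: "('a \<Rightarrow> real) set \<Rightarrow> ('a \<Rightarrow> real) \<Rightarrow> (('a \<Rightarrow> real) \<Rightarrow> real) \<Rightarrow> bool" where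
  "ring_hom_to_real R u \<phi> \<longleftrightarrow>
     (\<forall>f\<in>R. \<forall>g\<in>R. \<phi> (\<lambda>x. f x + g x) = \<phi> f + \<phi> g \<and> \<phi> (\<lambda>x. f x * g x) = \<phi> f * \<phi> g) \<and>
     \<phi> u = 1"

definition weak_subst_points :: "'a::euclidean_space set \<Rightarrow> ('a \<Rightarrow> real) set \<Rightarrow> bool" where
  "weak_subst_points V B \<longleftrightarrow>
     (\<forall>\<phi>. ring_hom_to_real (coord_ring V) (unit_on V) \<phi> \<longrightarrow>
        (\<exists>\<psi>. ring_hom_to_real B (unit_on V) \<psi> \<and> (\<forall>f\<in>coord_ring V. \<psi> f = \<phi> f)) \<and>
        (\<forall>\<psi>1 \<psi>2. ring_hom_to_real B (unit_on V) \<psi>1 \<and> (\<forall>f\<in>coord_ring V. \<psi>1 f = \<phi> f) \<and>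
                  ring_hom_to_real B (unit_on V) \<psi>2 \<and> (\<forall>f\<in>coord_ring V. \<psi>2 f = \<phi> f)
                  \<longrightarrow> (\<forall>f\<in>B. \<psi>1 f = \<psi>2 f)))"

end

theory Submission
  imports Defs
begin

lemma sigma_id:
  fixes s :: "real \<Rightarrow> real"
  assumes add: "\<And>x y. s (x+y) = s x + s y" and mul: "\<And>x y. s (x*y) = s x * s y"
    and one: "s 1 = 1"
  shows "s c = c"
proof -
  have s0: "s 0 = 0" using add[of 0 0] by simp
  have sneg: "s (-x) = - s x" for x using add[of x "-x"] s0 by simp
  have snat: "s (of_nat n) = of_nat n" for n
    by (induction n) (simp_all add: s0 add one)
  have sint: "s (of_int z) = of_int z" for z
  proof (cases "z \<ge> 0")
    case True
    then have "z = int (nat z)" by simp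
    then show ?thesis using snat by (metis of_int_of_nat_eq)
  next
    case False
    then have "z = - int (nat (-z))" by simp
    then show ?thesis using snat sneg by (metis of_int_of_nat_eq of_int_minus)
  qed
  have srat: "s q = q" if "q \<in> \<rat>" for q
  proof -
    obtain m n where mn: "n > 0" "q = of_int m / of_int n" using \<open>q \<in> \<rat>\<close> by (rule Rats_cases')
    then have "q * of_int n = of_int m" by simp
    hence "s q * s (of_int n) = of_int m" using mul sint by metis
    hence "s q * of_int n = of_int m" using sint by simp
    hence "s q * of_int n = q * of_int n" using \<open>q * of_int n = of_int m\<close> by simp
    thus ?thesis using mn(1) by simp
  qed
  have spos: "0 \<le> s x" if "0 \<le> x" for x
  proof -
    have "x = sqrt x * sqrt x" using that by simp
    hence "s x = s (sqrt x) * s (sqrt x)" using mul by metis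
    thus ?thesis by simp
  qed
  have smono: "s x \<le> s y" if "x \<le> y" for x y
    using spos[of "y - x"] add[of x "y-x"] that by simp
  show ?thesis
  proof (rule ccontr)
    assume "s c \<noteq> c"
    then consider "s c < c" | "c < s c" by linarith
    thus False
    proof cases
      case 1
      then obtain q where "q\<in>\<rat>" "s c < q" "q < c" using Rats_dense_in_real by blast
      then show False using smono[of q c] srat by force
    next
      case 2
      then obtain q where "q\<in>\<rat>" "c < q" "q < s c" using Rats_dense_in_real by blast
      then show False using smono[of c q] srat by force
    qed
  qed
qed

lemma restr_add: "(\<lambda>x. restr V p x + restr V q x) = restr V (\<lambda>x. p x + q x)"
  by (auto simp: restr_def)

lemma restr_mult: "(\<lambda>x. restr V p x * restr V q x) = restr V (\<lambda>x. p x * q x)"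
  by (auto simp: restr_def)

lemma in_coord: "polyfun p \<Longrightarrow> restr V p \<in> coord_ring V"
  by (auto simp: coord_ring_def)

lemma hom_parts:
  assumes "ring_hom_to_real R u \<phi>" "f \<in> R" "g \<in> R"
  shows "\<phi> (\<lambda>x. f x + g x) = \<phi> f + \<phi> g" "\<phi> (\<lambda>x. f x * g x) = \<phi> f * \<phi> g"
  using assms unfolding ring_hom_to_real_def by auto

lemma hom_const:
  assumes "ring_hom_to_real (coord_ring V) (unit_on V) \<phi>"
  shows "\<phi> (restr V (\<lambda>_. c)) = c"
proof -
  let ?s = "\<lambda>c. \<phi> (restr V (\<lambda>_. c))"
  have m: "restr V (\<lambda>_. c) \<in> coord_ring V" for c by (rule in_coord) (rule polyfun.const)
  have "?s c = c"
  proof (rule sigma_id)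
    fix x y
    have "?s (x+y) = \<phi> (\<lambda>z. restr V (\<lambda>_. x) z + restr V (\<lambda>_. y) z)"
      by (simp only: restr_add)
    also have "\<dots> = ?s x + ?s y" by (rule hom_parts(1)[OF assms m m])
    finally show "?s (x+y) = ?s x + ?s y" .
    have "?s (x*y) = \<phi> (\<lambda>z. restr V (\<lambda>_. x) z * restr V (\<lambda>_. y) z)"
      by (simp only: restr_mult)
    also have "\<dots> = ?s x * ?s y" by (rule hom_parts(2)[OF assms m m])
    finally show "?s (x*y) = ?s x * ?s y" .
  next
    show "?s 1 = 1" using assms unfolding ring_hom_to_real_def unit_on_def by simp
  qed
  then show ?thesis .
qed

lemma hom_eval:
  fixes V :: "'a::euclidean_space set"
  assumes hom: "ring_hom_to_real (coord_ring V) (unit_on V) \<phi>"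
    and a: "a = (\<Sum>b\<in>Basis. \<phi> (restr V (\<lambda>x. x \<bullet> b)) *\<^sub>R b)"
  shows "polyfun p \<Longrightarrow> \<phi> (restr V p) = p a"
proof (induction rule: polyfun.induct)
  case (const c)
  then show ?case using hom_const[OF hom] by simp
next
  case (coord b)
  have "a \<bullet> b = \<phi> (restr V (\<lambda>x. x \<bullet> b))" unfolding a using coord
    by (simp add: inner_sum_left inner_Basis if_distrib cong: if_cong)
  then show ?case by simp
next
  case (add p q)
  have "\<phi> (restr V (\<lambda>x. p x + q x)) = \<phi> (\<lambda>z. restr V p z + restr V q z)"
    by (simp only: restr_add)
  also have "\<dots> = \<phi> (restr V p) + \<phi> (restr V q)"
    by (rule hom_parts(1)[OF hom in_coord[OF add(1)] in_coord[OF add(2)]])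
  finally show ?case using add by simp
next
  case (mult p q)
  have "\<phi> (restr V (\<lambda>x. p x * q x)) = \<phi> (\<lambda>z. restr V p z * restr V q z)"
    by (simp only: restr_mult)
  also have "\<dots> = \<phi> (restr V p) * \<phi> (restr V q)"
    by (rule hom_parts(2)[OF hom in_coord[OF mult(1)] in_coord[OF mult(2)]])
  finally show ?case using mult by simp
qed

lemma polyfun_sum: "finite S \<Longrightarrow> (\<And>b. b \<in> S \<Longrightarrow> polyfun (f b)) \<Longrightarrow> polyfun (\<lambda>x. \<Sum>b\<in>S. f b x)"
proof (induction S rule: finite_induct)
  case empty
  then show ?case using polyfun.const[of 0] by simp
next
  case (insert b S)
  then show ?case using polyfun.add[of "f b" "\<lambda>x. \<Sum>b\<in>S. f b x"] by simp
qed

theorem proposition4p1: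
  fixes V :: "(real ^ 'n) set" and B :: "(real ^ 'n \<Rightarrow> real) set"
  assumes "irreducible_alg V" and "singular_var V" and "central V"
    and "csa_subalgebra V B"
    and "lojasiewicz_prop V B"
  shows "weak_subst_points V B"
  unfolding weak_subst_points_def
proof (intro allI impI)
  fix \<phi>
  assume hom: "ring_hom_to_real (coord_ring V) (unit_on V) \<phi>"
  define a where "a = (\<Sum>b\<in>Basis. \<phi> (restr V (\<lambda>x. x \<bullet> b)) *\<^sub>R (b::real^'n))"
  have ev: "polyfun p \<Longrightarrow> \<phi> (restr V p) = p a" for p using hom_eval[OF hom a_def] .
  have sub: "coord_ring V \<subseteq> B" "B \<subseteq> cont_semialg_funs V"
    and cl: "\<And>f g. f \<in> B \<Longrightarrow> g \<in> B \<Longrightarrow> (\<lambda>x. f x + g x) \<in> B \<and> (\<lambda>x. f x * g x) \<in> B"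
    using assms(4) unfolding csa_subalgebra_def by auto
  have out: "f x = 0" if "f \<in> B" "x \<notin> V" for f x
    using that sub(2) unfolding cont_semialg_funs_def restr_def by auto
  have aV: "a \<in> V"
  proof -
    obtain P where P: "finite P" "\<forall>p\<in>P. polyfun p" "V = {x. \<forall>p\<in>P. p x = 0}"
      using assms(1) unfolding irreducible_alg_def alg_set_def by blast
    have "p a = 0" if "p \<in> P" for p
    proof -
      have "restr V p = restr V (\<lambda>_. 0)" using that P(3) by (auto simp: restr_def)
      have "p a = \<phi> (restr V p)" using ev P(2) that by simp
      also have "\<dots> = \<phi> (restr V (\<lambda>_. 0))" using \<open>restr V p = restr V (\<lambda>_. 0)\<close> by simp
      also have "\<dots> = 0" by (rule hom_const[OF hom])
      finally show ?thesis .
    qed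
    then show ?thesis using P(3) by simp
  qed
  have uniq: "\<psi> f = f a" if psi: "ring_hom_to_real B (unit_on V) \<psi>" "\<forall>f\<in>coord_ring V. \<psi> f = \<phi> f"
    and fB: "f \<in> B" for \<psi> f
  proof -
    define c where "c = restr V (\<lambda>_. - f a)"
    have cC: "c \<in> coord_ring V" unfolding c_def by (rule in_coord) (rule polyfun.const)
    define g where "g = (\<lambda>x. f x + c x)"
    have gB: "g \<in> B" unfolding g_def using cl fB cC sub(1) by blast
    have cB: "c \<in> B" using cC sub(1) by blast
    have "\<psi> g = \<psi> f + \<psi> c" unfolding g_def by (rule hom_parts(1)[OF psi(1) fB cB])
    also have "\<psi> c = \<phi> c" using psi(2) cC by blast
    also have "\<phi> c = - f a" unfolding c_def by (rule hom_const[OF hom])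
    finally have psig: "\<psi> g = \<psi> f - f a" by simp
    define hp where "hp = (\<lambda>x::real^'n. \<Sum>b\<in>Basis. (x \<bullet> b + - (a \<bullet> b)) * (x \<bullet> b + - (a \<bullet> b)))"
    have hpp: "polyfun hp" unfolding hp_def
    proof (rule polyfun_sum)
      fix b :: "real^'n" assume "b \<in> Basis"
      then have "polyfun (\<lambda>x. x \<bullet> b + - (a \<bullet> b))"
        using polyfun.add[OF polyfun.coord polyfun.const] by blast
      then show "polyfun (\<lambda>x. (x \<bullet> b + - (a \<bullet> b)) * (x \<bullet> b + - (a \<bullet> b)))"
        using polyfun.mult by blast
    qed simp
    define h where "h = restr V hp"
    have hC: "h \<in> coord_ring V" unfolding h_def using hpp by (rule in_coord)
    have hB: "h \<in> B" using hC sub(1) by blast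
    have psih: "\<psi> h = 0" using psi(2) hC ev[OF hpp] unfolding h_def hp_def by simp
    have zs: "zero_set V h \<subseteq> zero_set V g"
    proof
      fix x assume "x \<in> zero_set V h"
      then have xV: "x \<in> V" and "hp x = 0" unfolding zero_set_def h_def restr_def by auto
      then have "\<forall>b\<in>Basis. (x \<bullet> b + - (a \<bullet> b)) * (x \<bullet> b + - (a \<bullet> b)) = 0"
        unfolding hp_def by (subst (asm) sum_nonneg_eq_0_iff) auto
      then have "\<forall>b\<in>Basis. x \<bullet> b = a \<bullet> b" by simp
      then have "x = a" using euclidean_eqI[of x a] by blast
      then show "x \<in> zero_set V g" using xV unfolding zero_set_def g_def c_def restr_def by simp
    qed
    obtain k N where kB: "k \<in> B" and kN: "\<forall>x\<in>V. g x ^ N = h x * k x"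
      using assms(5)[unfolded lojasiewicz_prop_def, rule_format, OF hB gB zs] by blast
    have N0: "N \<noteq> 0"
    proof
      assume "N = 0"
      then have "1 = h a * k a" using kN aV by simp
      moreover have "h a = 0" using aV unfolding h_def restr_def hp_def by simp
      ultimately show False by simp
    qed
    then obtain M where NM: "N = Suc M" using not0_implies_Suc by blast
    have pw: "(\<lambda>x. g x ^ Suc m) \<in> B \<and> \<psi> (\<lambda>x. g x ^ Suc m) = \<psi> g ^ Suc m" for m
    proof (induction m)
      case 0
      then show ?case using gB by simp
    next
      case (Suc m)
      have e: "(\<lambda>x. g x ^ Suc (Suc m)) = (\<lambda>x. g x * g x ^ Suc m)" by simp
      have m: "(\<lambda>x. g x ^ Suc m) \<in> B" using Suc by blast
      have "(\<lambda>x. g x * g x ^ Suc m) \<in> B" using cl[OF gB m] by blast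
      moreover have "\<psi> (\<lambda>x. g x * g x ^ Suc m) = \<psi> g * \<psi> (\<lambda>x. g x ^ Suc m)"
        by (rule hom_parts(2)[OF psi(1) gB m])
      ultimately show ?case unfolding e using Suc by simp
    qed
    have feq: "(\<lambda>x. g x ^ N) = (\<lambda>x. h x * k x)"
    proof
      fix x show "g x ^ N = h x * k x"
        using kN out[OF gB, of x] out[OF hB, of x] NM by (cases "x \<in> V") auto
    qed
    have "\<psi> g ^ N = \<psi> (\<lambda>x. g x ^ N)" using pw[of M] NM by simp
    also have "\<dots> = \<psi> (\<lambda>x. h x * k x)" using feq by simp
    also have "\<dots> = \<psi> h * \<psi> k" by (rule hom_parts(2)[OF psi(1) hB kB])
    finally have "\<psi> g ^ N = \<psi> h * \<psi> k" .
    then have "\<psi> g ^ N = 0" using psih by simp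
    then have "\<psi> g = 0" using N0 by simp
    then show ?thesis using psig by simp
  qed
  show "(\<exists>\<psi>. ring_hom_to_real B (unit_on V) \<psi> \<and> (\<forall>f\<in>coord_ring V. \<psi> f = \<phi> f)) \<and>
        (\<forall>\<psi>1 \<psi>2. ring_hom_to_real B (unit_on V) \<psi>1 \<and> (\<forall>f\<in>coord_ring V. \<psi>1 f = \<phi> f) \<and>
                  ring_hom_to_real B (unit_on V) \<psi>2 \<and> (\<forall>f\<in>coord_ring V. \<psi>2 f = \<phi> f)
                  \<longrightarrow> (\<forall>f\<in>B. \<psi>1 f = \<psi>2 f))"
  proof (intro conjI allI impI)
    show "\<exists>\<psi>. ring_hom_to_real B (unit_on V) \<psi> \<and> (\<forall>f\<in>coord_ring V. \<psi> f = \<phi> f)"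
    proof (intro exI conjI)
      show "ring_hom_to_real B (unit_on V) (\<lambda>f. f a)"
        using aV unfolding ring_hom_to_real_def unit_on_def restr_def by simp
      show "\<forall>f\<in>coord_ring V. f a = \<phi> f"
        using ev aV unfolding coord_ring_def restr_def by auto
    qed
  next
    fix \<psi>1 \<psi>2
    assume "ring_hom_to_real B (unit_on V) \<psi>1 \<and> (\<forall>f\<in>coord_ring V. \<psi>1 f = \<phi> f) \<and>
            ring_hom_to_real B (unit_on V) \<psi>2 \<and> (\<forall>f\<in>coord_ring V. \<psi>2 f = \<phi> f)"
    then show "\<forall>f\<in>B. \<psi>1 f = \<psi>2 f" using uniq by metis
  qed
qed

end
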